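(* Let $V\in(\mathbb{R}\cup\{-\infty\})^{n\times p}$ have no row and no column identically equal to $-\infty$, and let $T=T_V:(\mathbb{R}\cup\{-\infty\})^n\to(\mathbb{R}\cup\{-\infty\})^n$ be the operator $$T_i(x)=\inf_{k\in[p],\,(i,k)\in E}\Big[-V_{ik}+\max_{j\in[n],\,j\neq i}(V_{jk}+x_j)\Big],\qquad i\in[n],$$ where $E=\{(i,k)\in[n]\times[p]: V_{ik}\neq-\infty\}$. Then $\rho(T)\le 0$ and $$-\rho(T)=\operatorname{inrad}(\operatorname{Col}(V)).$$ Moreover, if $\rho(T)$ is finite, then for any vector $a\in\mathbb{R}^n$ such that $T(a)\le \rho(T)+a$, the Hilbert ball $B(-a,-\rho(T))$ is included in $\operatorname{Col}(V)\cap\mathbb{R}^n$ and has maximal radius among Hilbert balls centered at a point of $\mathbb{R}^n$ and included in $\operatorname{Col}(V)$.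
   Context: Write $\mathbb{R}_{\max}=\mathbb{R}\cup\{-\infty\}$, with conventions $-\infty+c=-\infty$ for $c\in\mathbb{R}_{\max}$ and the maximum of an empty family equal to $-\infty$; $\bot$ denotes the identically $-\infty$ vector, and $\lambda+x$ denotes the vector $(\lambda+x_i)_i$. For a matrix $V$, $\operatorname{Col}(V)=\{Vx: x\in\mathbb{R}_{\max}^p\}$ with $(Vx)_i=\max_{k}(V_{ik}+x_k)$ (the tropical column span). Hilbert's projective metric on $\mathbb{R}_{\max}^n$: for $x,y$ not both $\bot$, $d(x,y)=\inf\{\lambda-\mu:\lambda,\mu\in\mathbb{R},\ \mu+y_i\le x_i\le\lambda+y_i\ \forall i\}\in[0,+\infty]$, and $d(\bot,\bot)=0$. For $a\in\mathbb{R}^n$ and $r\in[0,+\infty]$, $B(a,r)=\{x\in\mathbb{R}_{\max}^n: d(a,x)\le r\}$. The inner radius $\operatorname{inrad}(\mathcal{C})$ of a set $\mathcal{C}\subset\mathbb{R}_{\max}^n$ is the supremum of the radii $r$ of Hilbert balls $B(a,r)$ with $a\in\mathbb{R}^n$ included in the tropical cone generated by $\mathcal C$ (for $\mathcal C=\operatorname{Col}(V)$, included in $\operatorname{Col}(V)$). For an order-preserving, continuous map $T:\mathbb{R}_{\max}^n\to\mathbb{R}_{\max}^n$ commuting with addition of constants, $\rho(T)=\sup\{\lambda\in\mathbb{R}\cup\{-\infty\}: \exists u\in\mathbb{R}_{\max}^n,\ u\neq\bot,\ T(u)=\lambda+u\}$. *)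

theory Defs
  imports "HOL-Analysis.Analysis" "HOL-Library.Extended_Real"
begin

text \<open>R_max = R with -infinity, represented inside ereal by excluding +infinity.
Vectors of R_max^n are functions 'n => ereal with no +infinity entry.\<close>

definition Rmax_vecs :: "('n \<Rightarrow> ereal) set" where
  "Rmax_vecs = {x. \<forall>i. x i \<noteq> \<infinity>}"

definition botv :: "'n \<Rightarrow> ereal" where
  "botv = (\<lambda>_. -\<infinity>)"

definition trop_mv :: "('n \<Rightarrow> 'p \<Rightarrow> ereal) \<Rightarrow> ('p \<Rightarrow> ereal) \<Rightarrow> 'n \<Rightarrow> ereal" where
  "trop_mv V x = (\<lambda>i. SUP k. V i k + x k)"

definition Col :: "('n \<Rightarrow> 'p::finite \<Rightarrow> ereal) \<Rightarrow> ('n \<Rightarrow> ereal) set" where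
  "Col V = {trop_mv V x | x. x \<in> Rmax_vecs}"

definition hilbert_dist :: "('n \<Rightarrow> ereal) \<Rightarrow> ('n \<Rightarrow> ereal) \<Rightarrow> ereal" where
  "hilbert_dist x y =
     (if x = botv \<and> y = botv then 0
      else Inf {ereal (l - m) | l m. \<forall>i. ereal m + y i \<le> x i \<and> x i \<le> ereal l + y i})"

definition hball :: "('n \<Rightarrow> real) \<Rightarrow> ereal \<Rightarrow> ('n \<Rightarrow> ereal) set" where
  "hball a r = {x \<in> Rmax_vecs. hilbert_dist (\<lambda>i. ereal (a i)) x \<le> r}"

definition inrad_Col :: "('n \<Rightarrow> 'p::finite \<Rightarrow> ereal) \<Rightarrow> ereal" where
  "inrad_Col V = Sup {r. 0 \<le> r \<and> (\<exists>a. hball a r \<subseteq> Col V)}"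

definition T_op :: "('n \<Rightarrow> 'p \<Rightarrow> ereal) \<Rightarrow> ('n \<Rightarrow> ereal) \<Rightarrow> 'n \<Rightarrow> ereal" where
  "T_op V x = (\<lambda>i. INF k \<in> {k. V i k \<noteq> -\<infinity>}.
                 - V i k + (SUP j \<in> {j. j \<noteq> i}. V j k + x j))"

definition rho :: "(('n \<Rightarrow> ereal) \<Rightarrow> 'n \<Rightarrow> ereal) \<Rightarrow> ereal" where
  "rho T = Sup {lam. lam \<noteq> \<infinity> \<and>
      (\<exists>u \<in> Rmax_vecs. u \<noteq> botv \<and> T u = (\<lambda>i. lam + u i))}"

end

theory Submission
  imports Defs
begin


definition ex :: "ereal \<Rightarrow> real" where
  "ex z = (case z of ereal r \<Rightarrow> exp r | _ \<Rightarrow> 0)"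

lemma ex_ereal[simp]: "ex (ereal r) = exp r" by (simp add: ex_def)
lemma ex_minf[simp]: "ex (-\<infinity>) = 0" by (simp add: ex_def)
lemma ex_nonneg: "0 \<le> ex z" by (cases z) (auto simp: ex_def)

lemma ex_mono: "a \<le> b \<Longrightarrow> b \<noteq> \<infinity> \<Longrightarrow> ex a \<le> ex b"
  by (cases a; cases b) auto

lemma ex_less: "a < b \<Longrightarrow> b \<noteq> \<infinity> \<Longrightarrow> ex a < ex b"
  by (cases a; cases b) auto

lemma ex_le_iff: "a \<noteq> \<infinity> \<Longrightarrow> b \<noteq> \<infinity> \<Longrightarrow> ex a \<le> ex b \<longleftrightarrow> a \<le> b"
  by (meson ex_less ex_mono linorder_not_le)

lemma ex_inj: "a \<noteq> \<infinity> \<Longrightarrow> b \<noteq> \<infinity> \<Longrightarrow> ex a = ex b \<Longrightarrow> a = b"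
  by (metis ex_le_iff order_antisym order_refl)

lemma ex_add: "a \<noteq> \<infinity> \<Longrightarrow> b \<noteq> \<infinity> \<Longrightarrow> ex (a+b) = ex a * ex b"
  by (cases a; cases b) (auto simp: exp_add)

lemma ex_uminus: "ex (- ereal r) = 1 / exp r"
  by (simp add: exp_minus field_simps)

lemma INF_attained:
  fixes f :: "'a \<Rightarrow> 'b::complete_linorder"
  assumes "finite A" "A \<noteq> {}"
  obtains x where "x \<in> A" "(INF y\<in>A. f y) = f x"
proof -
  have "Min (f ` A) \<in> f ` A" using assms by auto
  moreover have "Min (f ` A) = (INF y\<in>A. f y)" using assms by (simp add: Min_Inf)
  ultimately show ?thesis using that by auto
qed

lemma SUP_attained:
  fixes f :: "'a \<Rightarrow> 'b::complete_linorder"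
  assumes "finite A" "A \<noteq> {}"
  obtains x where "x \<in> A" "(SUP y\<in>A. f y) = f x"
proof -
  have "Max (f ` A) \<in> f ` A" using assms by auto
  moreover have "Max (f ` A) = (SUP y\<in>A. f y)" using assms by (simp add: Max_Sup)
  ultimately show ?thesis using that by auto
qed

lemma ex_INF:
  assumes "finite A" "A \<noteq> {}" "\<forall>x\<in>A. f x \<noteq> \<infinity>"
  shows "ex (INF x\<in>A. f x) = Min ((\<lambda>x. ex (f x)) ` A)"
proof -
  obtain x0 where x0: "x0 \<in> A" "(INF y\<in>A. f y) = f x0" using INF_attained[OF assms(1,2)] by blast
  have "Min ((\<lambda>x. ex (f x)) ` A) = ex (f x0)"
  proof (rule Min_eqI)
    show "finite ((\<lambda>x. ex (f x)) ` A)" using assms by auto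
    fix y assume "y \<in> (\<lambda>x. ex (f x)) ` A"
    then obtain x where "x \<in> A" "y = ex (f x)" by auto
    moreover have "f x0 \<le> f x" using x0 \<open>x \<in> A\<close> by (metis INF_lower)
    ultimately show "ex (f x0) \<le> y" using assms(3) ex_mono by auto
  next
    show "ex (f x0) \<in> (\<lambda>x. ex (f x)) ` A" using x0 by auto
  qed
  then show ?thesis using x0 by simp
qed

lemma ex_SUP:
  assumes "finite A" "\<forall>x\<in>A. f x \<noteq> \<infinity>"
  shows "ex (SUP x\<in>A. f x) = Max (insert 0 ((\<lambda>x. ex (f x)) ` A))"
proof (cases "A = {}")
  case True then show ?thesis by (simp add: bot_ereal_def)
next
  case False
  obtain x0 where x0: "x0 \<in> A" "(SUP y\<in>A. f y) = f x0" using SUP_attained[OF assms(1) False] by blast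
  have "Max (insert 0 ((\<lambda>x. ex (f x)) ` A)) = ex (f x0)"
  proof (rule Max_eqI)
    show "finite (insert 0 ((\<lambda>x. ex (f x)) ` A))" using assms by auto
    fix y assume "y \<in> insert 0 ((\<lambda>x. ex (f x)) ` A)"
    then consider "y = 0" | x where "x \<in> A" "y = ex (f x)" by auto
    then show "y \<le> ex (f x0)"
    proof cases
      case 1 then show ?thesis by (simp add: ex_nonneg)
    next
      case 2
      moreover have "f x \<le> f x0" using x0 \<open>x \<in> A\<close> by (metis SUP_upper)
      ultimately show ?thesis using assms(2) x0 ex_mono by auto
    qed
  next
    show "ex (f x0) \<in> insert 0 ((\<lambda>x. ex (f x)) ` A)" using x0 by auto
  qed
  then show ?thesis using x0 by simp
qed

lemma SUP_not_inf:
  fixes f :: "'a \<Rightarrow> ereal"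
  assumes "finite A" "\<forall>x\<in>A. f x \<noteq> \<infinity>"
  shows "(SUP x\<in>A. f x) \<noteq> \<infinity>"
proof (cases "A = {}")
  case True then show ?thesis by (simp add: bot_ereal_def)
next
  case False
  then obtain x0 where "x0 \<in> A" "(SUP y\<in>A. f y) = f x0" using SUP_attained[OF assms(1) False] by blast
  then show ?thesis using assms by auto
qed

definition Fm :: "('n::finite \<Rightarrow> 'p::finite \<Rightarrow> ereal) \<Rightarrow> 'n \<Rightarrow> real^'n \<Rightarrow> real" where
  "Fm V i y = Min ((\<lambda>k. ex (- V i k) * Max (insert 0 ((\<lambda>j. ex (V j k) * y$j) ` {j. j \<noteq> i}))) ` {k. V i k \<noteq> -\<infinity>})"

lemma T_term_not_inf:
  fixes V :: "'n::finite \<Rightarrow> 'p::finite \<Rightarrow> ereal"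
  assumes V: "\<forall>i k. V i k \<noteq> \<infinity>" and u: "\<forall>j. u j \<noteq> \<infinity>" and k: "V i k \<noteq> -\<infinity>"
  shows "- V i k + (SUP j\<in>{j. j \<noteq> i}. V j k + u j) \<noteq> \<infinity>"
proof -
  have "(SUP j\<in>{j. j \<noteq> i}. V j k + u j) \<noteq> \<infinity>"
    by (rule SUP_not_inf) (use V u in auto)
  moreover have "- V i k \<noteq> \<infinity>" using k by (cases "V i k") auto
  ultimately show ?thesis by simp
qed

lemma T_not_inf:
  fixes V :: "'n::finite \<Rightarrow> 'p::finite \<Rightarrow> ereal"
  assumes V: "\<forall>i k. V i k \<noteq> \<infinity>" and row: "\<forall>i. \<exists>k. V i k \<noteq> -\<infinity>" and u: "\<forall>j. u j \<noteq> \<infinity>"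
  shows "T_op V u i \<noteq> \<infinity>"
proof -
  obtain k where k: "V i k \<noteq> -\<infinity>" using row by blast
  have "T_op V u i \<le> - V i k + (SUP j\<in>{j. j \<noteq> i}. V j k + u j)"
    unfolding T_op_def using k by (auto intro: INF_lower)
  then show ?thesis using T_term_not_inf[OF V u k] by (auto simp: top_unique)
qed

lemma T_conv:
  fixes V :: "'n::finite \<Rightarrow> 'p::finite \<Rightarrow> ereal"
  assumes V: "\<forall>i k. V i k \<noteq> \<infinity>" and row: "\<forall>i. \<exists>k. V i k \<noteq> -\<infinity>" and u: "\<forall>j. u j \<noteq> \<infinity>"
  shows "ex (T_op V u i) = Fm V i (\<chi> j. ex (u j))"
proof -
  let ?E = "{k. V i k \<noteq> -\<infinity>}"
  have E: "finite ?E" "?E \<noteq> {}" using row by auto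
  have "ex (T_op V u i) = Min ((\<lambda>k. ex (- V i k + (SUP j\<in>{j. j \<noteq> i}. V j k + u j))) ` ?E)"
    unfolding T_op_def by (rule ex_INF[OF E]) (use T_term_not_inf[OF V u] in auto)
  also have "\<dots> = Fm V i (\<chi> j. ex (u j))"
    unfolding Fm_def
  proof (rule arg_cong[where f=Min], rule image_cong[OF refl])
    fix k assume k: "k \<in> ?E"
    have mk: "- V i k \<noteq> \<infinity>" using k by (cases "V i k") auto
    have sk: "(SUP j\<in>{j. j \<noteq> i}. V j k + u j) \<noteq> \<infinity>"
      by (rule SUP_not_inf) (use V u in auto)
    have "ex (- V i k + (SUP j\<in>{j. j \<noteq> i}. V j k + u j))
        = ex (- V i k) * ex (SUP j\<in>{j. j \<noteq> i}. V j k + u j)"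
      using ex_add[OF mk sk] .
    also have "ex (SUP j\<in>{j. j \<noteq> i}. V j k + u j) = Max (insert 0 ((\<lambda>j. ex (V j k + u j)) ` {j. j \<noteq> i}))"
      by (rule ex_SUP) (use V u in auto)
    also have "(\<lambda>j. ex (V j k + u j)) ` {j. j \<noteq> i} = (\<lambda>j. ex (V j k) * (\<chi> j. ex (u j))$j) ` {j. j \<noteq> i}"
      using V u by (auto simp: ex_add)
    finally show "ex (- V i k + (SUP j\<in>{j. j \<noteq> i}. V j k + u j)) =
         ex (- V i k) * Max (insert 0 ((\<lambda>j. ex (V j k) * (\<chi> j. ex (u j))$j) ` {j. j \<noteq> i}))" .
  qed
  finally show ?thesis .
qed

lemma cont_Max_insert:
  fixes f :: "'b \<Rightarrow> 'a::topological_space \<Rightarrow> real"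
  assumes "finite J" "continuous_on S g" "\<forall>j\<in>J. continuous_on S (f j)"
  shows "continuous_on S (\<lambda>x. Max (insert (g x) ((\<lambda>j. f j x) ` J)))"
  using assms
proof (induction J rule: finite_induct)
  case empty then show ?case by simp
next
  case (insert a J)
  have eq: "(\<lambda>x. Max (insert (g x) ((\<lambda>j. f j x) ` insert a J))) = (\<lambda>x. max (f a x) (Max (insert (g x) ((\<lambda>j. f j x) ` J))))"
    using insert.hyps by (intro ext) (metis (no_types) Max_insert finite_imageI finite_insert image_insert insert_commute insert_not_empty)
  show ?case unfolding eq using insert by (intro continuous_on_max) auto
qed

lemma cont_Min:
  fixes f :: "'b \<Rightarrow> 'a::topological_space \<Rightarrow> real"
  assumes "finite K" "K \<noteq> {}" "\<forall>k\<in>K. continuous_on S (f k)"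
  shows "continuous_on S (\<lambda>x. Min ((\<lambda>k. f k x) ` K))"
  using assms
proof (induction K rule: finite_ne_induct)
  case (singleton a) then show ?case by simp
next
  case (insert a K)
  have eq: "(\<lambda>x. Min ((\<lambda>k. f k x) ` insert a K)) = (\<lambda>x. min (f a x) (Min ((\<lambda>k. f k x) ` K)))"
    using insert.hyps by auto
  show ?case unfolding eq using insert by (intro continuous_on_min) auto
qed

lemma Fm_cont:
  fixes V :: "'n::finite \<Rightarrow> 'p::finite \<Rightarrow> ereal"
  assumes row: "\<forall>i. \<exists>k. V i k \<noteq> -\<infinity>"
  shows "continuous_on UNIV (Fm V i)"
proof -
  have "continuous_on UNIV (\<lambda>y. Min ((\<lambda>k. ex (- V i k) * Max (insert 0 ((\<lambda>j. ex (V j k) * y$j) ` {j. j \<noteq> i}))) ` {k. V i k \<noteq> -\<infinity>}))"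
    apply (rule cont_Min)
    using row apply auto[2]
    apply (intro ballI continuous_intros cont_Max_insert)
      apply (auto intro!: continuous_intros)
    done
  then show ?thesis unfolding Fm_def[abs_def] by simp
qed

lemma Fm_nonneg:
  fixes V :: "'n::finite \<Rightarrow> 'p::finite \<Rightarrow> ereal"
  assumes row: "\<forall>i. \<exists>k. V i k \<noteq> -\<infinity>"
  shows "0 \<le> Fm V i y"
proof -
  have "finite {k. V i k \<noteq> -\<infinity>}" "{k. V i k \<noteq> -\<infinity>} \<noteq> {}" using row by auto
  moreover have "\<forall>k. 0 \<le> ex (- V i k) * Max (insert 0 ((\<lambda>j. ex (V j k) * y$j) ` {j. j \<noteq> i}))"
    by (intro allI mult_nonneg_nonneg ex_nonneg) (auto simp: Max_ge_iff)
  ultimately show ?thesis unfolding Fm_def by (auto simp: Min_ge_iff)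
qed

definition Simp :: "(real^'n) set" where
  "Simp = {y. (\<forall>i. 0 \<le> y$i) \<and> sum (\<lambda>i. y$i) UNIV = 1}"

lemma Simp_compact: "compact (Simp :: (real^'n::finite) set)"
unfolding compact_eq_bounded_closed proof
  show "bounded (Simp :: (real^'n) set)"
    unfolding bounded_iff
  proof (intro exI ballI)
    fix y :: "real^'n" assume y: "y \<in> Simp"
    have "norm y \<le> sum (\<lambda>i. \<bar>y$i\<bar>) UNIV" by (rule norm_le_l1_cart)
    also have "\<dots> = sum (\<lambda>i. y$i) UNIV" using y by (simp add: Simp_def)
    finally show "norm y \<le> 1" using y by (simp add: Simp_def)
  qed
  have "Simp = {y::real^'n. \<forall>i. 0 \<le> y$i} \<inter> {y. sum (\<lambda>i. y$i) UNIV = 1}"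
    by (auto simp: Simp_def)
  moreover have "closed {y::real^'n. sum (\<lambda>i. y$i) UNIV = 1}"
    by (rule closed_Collect_eq) (auto intro!: continuous_intros)
  ultimately show "closed (Simp :: (real^'n) set)"
    using closed_positive_orthant by (metis closed_Int)
qed

lemma Simp_convex: "convex (Simp :: (real^'n::finite) set)"
  unfolding convex_def Simp_def
  by (auto simp: sum.distrib sum_distrib_left[symmetric])

lemma Simp_ne: "(Simp :: (real^'n::finite) set) \<noteq> {}"
proof -
  have "(\<chi> i. 1 / real CARD('n)) \<in> (Simp :: (real^'n) set)"
    by (simp add: Simp_def)
  then show ?thesis by blast
qed

lemma fixed_pt:
  fixes V :: "'n::finite \<Rightarrow> 'p::finite \<Rightarrow> ereal"
  assumes row: "\<forall>i. \<exists>k. V i k \<noteq> -\<infinity>" and e: "0 < e"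
  shows "\<exists>y\<in>Simp. \<forall>i. (\<Sum>j\<in>UNIV. max (Fm V j y) e) * y$i = max (Fm V i y) e"
proof -
  define S where "S y = (\<Sum>j\<in>UNIV. max (Fm V j y) e)" for y
  have Spos: "0 < S y" for y
    unfolding S_def using e by (intro sum_pos) auto
  define G where "G y = (\<chi> i. max (Fm V i y) e / S y)" for y
  have cF: "continuous_on UNIV (Fm V i)" for i using Fm_cont[OF row] .
  have cS: "continuous_on UNIV S"
    unfolding S_def[abs_def] using cF
    by (intro continuous_intros) (auto intro: continuous_on_compose2[OF _ cF])
  have "continuous_on Simp G"
    unfolding G_def[abs_def]
    apply (intro continuous_intros)
      apply (rule continuous_on_subset[OF cF], simp)
     apply (rule continuous_on_subset[OF cS], simp)
    using Spos by (metis less_irrefl)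
  moreover have "G \<in> Simp \<rightarrow> Simp"
  proof
    fix y :: "real^'n" assume "y \<in> Simp"
    have "(\<Sum>i\<in>UNIV. max (Fm V i y) e / S y) = (\<Sum>i\<in>UNIV. max (Fm V i y) e) / S y"
      by (simp add: sum_divide_distrib)
    also have "\<dots> = 1" using Spos[of y] by (simp add: S_def)
    finally have "(\<Sum>i\<in>UNIV. G y $ i) = 1" unfolding G_def by simp
    moreover have "\<forall>i. 0 \<le> G y $ i" using Spos[of y] e unfolding G_def
      by (auto intro: divide_nonneg_pos)
    ultimately show "G y \<in> Simp" unfolding Simp_def by blast
  qed
  ultimately obtain y where y: "y \<in> Simp" "G y = y"
    using brouwer[OF Simp_compact Simp_convex Simp_ne] by blast
  have "S y * y$i = max (Fm V i y) e" for i
  proof -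
    have "y$i = max (Fm V i y) e / S y" using y(2) unfolding G_def by (metis vec_lambda_beta)
    then show ?thesis using Spos[of y] by (simp add: field_simps)
  qed
  then show ?thesis using y(1) unfolding S_def by blast
qed

lemma S_lower:
  fixes V :: "'n::finite \<Rightarrow> 'p::finite \<Rightarrow> ereal"
  assumes V: "\<forall>i k. V i k \<noteq> \<infinity>" and row: "\<forall>i. \<exists>k. V i k \<noteq> -\<infinity>"
    and nosub: "\<forall>c::'n\<Rightarrow>real. \<not> (\<forall>i. T_op V (\<lambda>j. ereal (c j)) i \<le> ereal \<nu> + ereal (c i))"
    and e: "0 < e" and y: "y \<in> Simp" and eq: "\<forall>i. S * y$i = max (Fm V i y) e"
  shows "exp \<nu> \<le> S"
proof -
  have pos: "0 < S \<and> 0 < y$i" for i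
  proof -
    have "0 < S * y$i" using eq e by (metis max.strict_coboundedI2)
    moreover have "0 \<le> y$i" using y by (simp add: Simp_def)
    ultimately show ?thesis by (auto simp: zero_less_mult_iff)
  qed
  define c where "c i = ln (y$i)" for i
  have yc: "(\<chi> j. ex (ereal (c j))) = y"
    using pos by (simp add: c_def vec_eq_iff)
  have le: "T_op V (\<lambda>j. ereal (c j)) i \<le> ereal (ln S) + ereal (c i)" for i
  proof -
    have "ex (T_op V (\<lambda>j. ereal (c j)) i) = Fm V i y"
      using T_conv[OF V row, of "\<lambda>j. ereal (c j)" i] yc by simp
    also have "\<dots> \<le> S * y$i" using eq by simp
    also have "\<dots> = ex (ereal (ln S) + ereal (c i))"
      using pos[of i] by (simp add: c_def exp_add)
    finally have h: "ex (T_op V (\<lambda>j. ereal (c j)) i) \<le> ex (ereal (ln S + c i))" by simp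
    have "T_op V (\<lambda>j. ereal (c j)) i \<le> ereal (ln S + c i)"
      using h ex_le_iff[OF T_not_inf[OF V row, of "\<lambda>j. ereal (c j)" i], of "ereal (ln S + c i)"] by simp
    then show ?thesis by simp
  qed
  have "\<not> ln S \<le> \<nu>"
  proof
    assume "ln S \<le> \<nu>"
    have "\<forall>i. T_op V (\<lambda>j. ereal (c j)) i \<le> ereal \<nu> + ereal (c i)"
    proof
      fix i
      have "T_op V (\<lambda>j. ereal (c j)) i \<le> ereal (ln S) + ereal (c i)" by (rule le)
      also have "\<dots> \<le> ereal \<nu> + ereal (c i)" using \<open>ln S \<le> \<nu>\<close> by simp
      finally show "T_op V (\<lambda>j. ereal (c j)) i \<le> ereal \<nu> + ereal (c i)" .
    qed
    then show False using nosub by blast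
  qed
  then have "\<nu> < ln S" by simp
  then show ?thesis using pos by (metis exp_less_cancel_iff exp_ln less_imp_le)
qed

lemma hard:
  fixes V :: "'n::finite \<Rightarrow> 'p::finite \<Rightarrow> ereal"
  assumes V: "\<forall>i k. V i k \<noteq> \<infinity>" and row: "\<forall>i. \<exists>k. V i k \<noteq> -\<infinity>"
    and nosub: "\<forall>c::'n\<Rightarrow>real. \<not> (\<forall>i. T_op V (\<lambda>j. ereal (c j)) i \<le> ereal \<nu> + ereal (c i))"
  shows "\<exists>lam u. ereal \<nu> \<le> lam \<and> lam \<noteq> \<infinity> \<and> u \<in> Rmax_vecs \<and> u \<noteq> botv \<and> T_op V u = (\<lambda>i. lam + u i)"
proof -
  define e :: "nat \<Rightarrow> real" where "e m = inverse (real (Suc m))" for m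
  have epos: "0 < e m" for m by (simp add: e_def)
  have "\<forall>m. \<exists>y\<in>Simp. \<forall>i. (\<Sum>j\<in>UNIV. max (Fm V j y) (e m)) * y$i = max (Fm V i y) (e m)"
    using fixed_pt[OF row epos] by blast
  then obtain Y where Y: "\<And>m. Y m \<in> Simp"
    "\<And>m i. (\<Sum>j\<in>UNIV. max (Fm V j (Y m)) (e m)) * Y m $ i = max (Fm V i (Y m)) (e m)"
    by metis
  define SS where "SS m = (\<Sum>j\<in>UNIV. max (Fm V j (Y m)) (e m))" for m
  have Slow: "exp \<nu> \<le> SS m" for m
    unfolding SS_def by (rule S_lower[OF V row nosub epos Y(1)]) (use Y(2) in blast)
  obtain y r where y: "y \<in> Simp" and r: "strict_mono r" and lim: "(Y \<circ> r) \<longlonglongrightarrow> y"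
    using compact_imp_seq_compact[OF Simp_compact] Y(1) unfolding seq_compact_def by metis
  have elim: "(\<lambda>m. e (r m)) \<longlonglongrightarrow> 0"
  proof -
    have "e \<longlonglongrightarrow> 0" unfolding e_def by (rule LIMSEQ_inverse_real_of_nat)
    from LIMSEQ_subseq_LIMSEQ[OF this r] show ?thesis by (simp add: o_def)
  qed
  have Flim: "(\<lambda>m. Fm V i (Y (r m))) \<longlonglongrightarrow> Fm V i y" for i
  proof -
    have "isCont (Fm V i) y"
      using Fm_cont[OF row] continuous_on_eq_continuous_at[OF open_UNIV] by blast
    from isCont_tendsto_compose[OF this lim] show ?thesis by (simp add: o_def)
  qed
  have MX: "(\<lambda>m. max (Fm V i (Y (r m))) (e (r m))) \<longlonglongrightarrow> Fm V i y" for i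
  proof -
    have "(\<lambda>m. max (Fm V i (Y (r m))) (e (r m))) \<longlonglongrightarrow> max (Fm V i y) 0"
      by (rule tendsto_max[OF Flim elim])
    then show ?thesis using Fm_nonneg[OF row, of i y] by (simp add: max_absorb1)
  qed
  define s where "s = (\<Sum>j\<in>UNIV. Fm V j y)"
  have Slim: "(\<lambda>m. SS (r m)) \<longlonglongrightarrow> s"
    unfolding SS_def s_def by (intro tendsto_sum) (use MX in auto)
  have ylim: "(\<lambda>m. Y (r m) $ i) \<longlonglongrightarrow> y $ i" for i
    using tendsto_vec_nth[OF lim] by (simp add: o_def)
  have eig: "s * y$i = Fm V i y" for i
  proof -
    have "(\<lambda>m. SS (r m) * Y (r m) $ i) \<longlonglongrightarrow> s * y$i"
      by (rule tendsto_mult[OF Slim ylim])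
    moreover have "(\<lambda>m. SS (r m) * Y (r m) $ i) = (\<lambda>m. max (Fm V i (Y (r m))) (e (r m)))"
      using Y(2) unfolding SS_def by simp
    ultimately show ?thesis using MX LIMSEQ_unique by metis
  qed
  have sge: "exp \<nu> \<le> s"
    by (rule LIMSEQ_le_const[OF Slim]) (use Slow in auto)
  then have spos: "0 < s" by (metis exp_gt_zero less_le_trans)
  have ynn: "0 \<le> y$j" for j using y by (simp add: Simp_def)
  define u where "u j = (if y$j = 0 then -\<infinity> else ereal (ln (y$j)))" for j
  have exu: "ex (u j) = y$j" for j
    using ynn[of j] by (auto simp: u_def)
  have unot: "\<forall>j. u j \<noteq> \<infinity>" by (simp add: u_def)
  have yu: "(\<chi> j. ex (u j)) = y" by (simp add: exu vec_eq_iff)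
  have Tu: "T_op V u i = ereal (ln s) + u i" for i
  proof (rule ex_inj)
    show "T_op V u i \<noteq> \<infinity>" by (rule T_not_inf[OF V row unot])
    show "ereal (ln s) + u i \<noteq> \<infinity>" by (simp add: u_def)
    have "ex (T_op V u i) = Fm V i y" using T_conv[OF V row unot, of i] yu by simp
    also have "\<dots> = s * y$i" using eig by simp
    also have "\<dots> = ex (ereal (ln s) + u i)"
      using spos ynn[of i] by (auto simp: u_def exp_add)
    finally show "ex (T_op V u i) = ex (ereal (ln s) + u i)" .
  qed
  have "\<exists>j. y$j \<noteq> 0"
  proof (rule ccontr)
    assume "\<not> (\<exists>j. y$j \<noteq> 0)"
    then have "sum (\<lambda>j. y$j) UNIV = 0" by simp
    then show False using y by (simp add: Simp_def)
  qed
  then have "u \<noteq> botv" by (auto simp: u_def botv_def fun_eq_iff)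
  moreover have "u \<in> Rmax_vecs" using unot by (simp add: Rmax_vecs_def)
  moreover have "ereal \<nu> \<le> ereal (ln s)" using sge spos by (simp add: ln_ge_iff)
  ultimately show ?thesis using Tu by (intro exI[of _ "ereal (ln s)"] exI[of _ u]) auto
qed



lemma T_le_shift:
  fixes V :: "'n::finite \<Rightarrow> 'p::finite \<Rightarrow> ereal"
  assumes row: "\<forall>i. \<exists>k. V i k \<noteq> -\<infinity>"
    and le: "\<forall>j. u j \<le> ereal t + ereal (c j)"
  shows "T_op V u i \<le> ereal t + T_op V (\<lambda>j. ereal (c j)) i"
proof -
  let ?E = "{k. V i k \<noteq> -\<infinity>}"
  have E: "finite ?E" "?E \<noteq> {}" using row by auto
  obtain k0 where k0: "k0 \<in> ?E"
    "(INF k\<in>?E. - V i k + (SUP j\<in>{j. j \<noteq> i}. V j k + ereal (c j))) = - V i k0 + (SUP j\<in>{j. j \<noteq> i}. V j k0 + ereal (c j))"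
    using INF_attained[OF E, of "\<lambda>k. - V i k + (SUP j\<in>{j. j \<noteq> i}. V j k + ereal (c j))"] by blast
  have "T_op V u i \<le> - V i k0 + (SUP j\<in>{j. j \<noteq> i}. V j k0 + u j)"
    unfolding T_op_def using k0(1) by (auto intro: INF_lower)
  also have "(SUP j\<in>{j. j \<noteq> i}. V j k0 + u j) \<le> ereal t + (SUP j\<in>{j. j \<noteq> i}. V j k0 + ereal (c j))"
  proof (rule SUP_least)
    fix j assume j: "j \<in> {j. j \<noteq> i}"
    have "V j k0 + u j \<le> V j k0 + (ereal t + ereal (c j))" using le by (intro add_left_mono) auto
    also have "\<dots> = ereal t + (V j k0 + ereal (c j))" by (rule add.left_commute)
    also have "\<dots> \<le> ereal t + (SUP j\<in>{j. j \<noteq> i}. V j k0 + ereal (c j))"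
      using j by (intro add_left_mono SUP_upper) auto
    finally show "V j k0 + u j \<le> ereal t + (SUP j\<in>{j. j \<noteq> i}. V j k0 + ereal (c j))" .
  qed
  then have "- V i k0 + (SUP j\<in>{j. j \<noteq> i}. V j k0 + u j) \<le> - V i k0 + (ereal t + (SUP j\<in>{j. j \<noteq> i}. V j k0 + ereal (c j)))"
    by (rule add_left_mono)
  also have "\<dots> = ereal t + (- V i k0 + (SUP j\<in>{j. j \<noteq> i}. V j k0 + ereal (c j)))"
    by (rule add.left_commute)
  also have "\<dots> = ereal t + T_op V (\<lambda>j. ereal (c j)) i"
    unfolding T_op_def using k0(2) by simp
  finally show ?thesis .
qed

lemma easy:
  fixes V :: "'n::finite \<Rightarrow> 'p::finite \<Rightarrow> ereal"
  assumes row: "\<forall>i. \<exists>k. V i k \<noteq> -\<infinity>"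
    and u: "u \<in> Rmax_vecs" "u \<noteq> botv" and eig: "T_op V u = (\<lambda>i. lam + u i)"
    and sub: "\<forall>i. T_op V (\<lambda>j. ereal (c j)) i \<le> ereal \<mu> + ereal (c i)"
  shows "lam \<le> ereal \<mu>"
proof -
  obtain i0 where i0: "(SUP i\<in>UNIV. u i - ereal (c i)) = u i0 - ereal (c i0)"
    using SUP_attained[of "UNIV::'n set" "\<lambda>i. u i - ereal (c i)"] by auto
  have upper: "u j - ereal (c j) \<le> u i0 - ereal (c i0)" for j
    using i0 by (metis SUP_upper UNIV_I)
  obtain j1 where j1: "u j1 \<noteq> -\<infinity>" using u(2) by (auto simp: botv_def fun_eq_iff)
  have uninf: "u j \<noteq> \<infinity>" for j using u(1) by (simp add: Rmax_vecs_def)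
  have "u i0 \<noteq> -\<infinity>"
  proof
    assume "u i0 = -\<infinity>"
    then have "u j1 - ereal (c j1) \<le> -\<infinity>" using upper[of j1] by simp
    then show False using j1 uninf[of j1] by (cases "u j1") auto
  qed
  then obtain a where a: "u i0 = ereal a" using uninf[of i0] by (cases "u i0") auto
  define t where "t = a - c i0"
  have le: "\<forall>j. u j \<le> ereal t + ereal (c j)"
  proof
    fix j
    show "u j \<le> ereal t + ereal (c j)"
    proof (cases "u j")
      case (real b)
      then have "b - c j \<le> a - c i0" using upper[of j] a by simp
      then show ?thesis using real by (simp add: t_def)
    qed (use uninf[of j] in auto)
  qed
  have "lam + u i0 = T_op V u i0" using eig by simp
  also have "\<dots> \<le> ereal t + T_op V (\<lambda>j. ereal (c j)) i0" by (rule T_le_shift[OF row le])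
  also have "\<dots> \<le> ereal t + (ereal \<mu> + ereal (c i0))" using sub by (intro add_left_mono) auto
  finally have "lam + ereal a \<le> ereal (\<mu> + a)" using a by (simp add: t_def add.commute)
  then show ?thesis by (cases lam) auto
qed

lemma P0:
  fixes V :: "'n::finite \<Rightarrow> 'p::finite \<Rightarrow> ereal"
  assumes V: "\<forall>i k. V i k \<noteq> \<infinity>" and row: "\<forall>i. \<exists>k. V i k \<noteq> -\<infinity>"
  shows "\<exists>c::'n\<Rightarrow>real. \<forall>i. T_op V (\<lambda>j. ereal (c j)) i \<le> ereal 0 + ereal (c i)"
proof -
  have "\<forall>i. \<exists>k. \<forall>k'. V i k' \<le> V i k"
  proof
    fix i
    obtain k where "(SUP k\<in>UNIV. V i k) = V i k" using SUP_attained[of "UNIV::'p set" "V i"] by auto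
    then show "\<exists>k. \<forall>k'. V i k' \<le> V i k" by (metis SUP_upper UNIV_I)
  qed
  then obtain km where km: "\<And>i k'. V i k' \<le> V i (km i)" by metis
  have kmfin: "V i (km i) \<noteq> -\<infinity>" for i
    using row km by (metis MInfty_eq_minfinity ereal_infty_less_eq(2))
  define c where "c i = - real_of_ereal (V i (km i))" for i
  have Vc: "V i (km i) = ereal (- c i)" for i
    using kmfin[of i] V by (cases "V i (km i)") (auto simp: c_def)
  show ?thesis
  proof (intro exI allI)
    fix i
    have "T_op V (\<lambda>j. ereal (c j)) i \<le> - V i (km i) + (SUP j\<in>{j. j \<noteq> i}. V j (km i) + ereal (c j))"
      unfolding T_op_def using kmfin[of i] by (auto intro: INF_lower)
    also have "(SUP j\<in>{j. j \<noteq> i}. V j (km i) + ereal (c j)) \<le> 0"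
    proof (rule SUP_least)
      fix j
      have "V j (km i) \<le> ereal (- c j)" using km[of j "km i"] Vc[of j] by simp
      then show "V j (km i) + ereal (c j) \<le> 0"
        by (cases "V j (km i)") auto
    qed
    then have "- V i (km i) + (SUP j\<in>{j. j \<noteq> i}. V j (km i) + ereal (c j)) \<le> - V i (km i) + 0"
      by (rule add_left_mono)
    also have "\<dots> = ereal 0 + ereal (c i)" using Vc[of i] by simp
    finally show "T_op V (\<lambda>j. ereal (c j)) i \<le> ereal 0 + ereal (c i)" .
  qed
qed


lemma hball_fin:
  fixes a :: "'n::finite \<Rightarrow> real"
  assumes x: "x \<in> hball a (ereal r)"
  shows "\<exists>xr. x = (\<lambda>i. ereal (xr i)) \<and> (\<forall>i j. a i - xr i - (a j - xr j) \<le> r)"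
proof -
  let ?H = "{ereal (l - m) | l m. \<forall>i. ereal m + x i \<le> ereal (a i) \<and> ereal (a i) \<le> ereal l + x i}"
  have xR: "\<forall>i. x i \<noteq> \<infinity>" using x by (simp add: hball_def Rmax_vecs_def)
  have nb: "(\<lambda>i. ereal (a i)) \<noteq> botv" by (auto simp: botv_def fun_eq_iff)
  have d: "Inf ?H \<le> ereal r" using x nb by (simp add: hball_def hilbert_dist_def)
  have ex_el: "\<exists>l m. (\<forall>i. ereal m + x i \<le> ereal (a i) \<and> ereal (a i) \<le> ereal l + x i) \<and> l - m < r + \<delta>"
    if "0 < \<delta>" for \<delta>
  proof -
    have "ereal r < ereal (r + \<delta>)" using that by simp
    with d have "Inf ?H < ereal (r + \<delta>)" by (rule le_less_trans)
    then obtain h where h: "h \<in> ?H" "h < ereal (r + \<delta>)" by (auto simp: Inf_less_iff)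
    from h(1) obtain l m where lm: "h = ereal (l - m)" "\<forall>i. ereal m + x i \<le> ereal (a i) \<and> ereal (a i) \<le> ereal l + x i"
      by blast
    have "l - m < r + \<delta>" using h(2) lm(1) by simp
    with lm(2) show ?thesis by blast
  qed
  obtain l0 m0 where lm0: "\<forall>i. ereal m0 + x i \<le> ereal (a i) \<and> ereal (a i) \<le> ereal l0 + x i"
    using ex_el[of 1] by auto
  have xfin: "x i \<noteq> -\<infinity>" for i
  proof
    assume "x i = -\<infinity>"
    then have "ereal (a i) \<le> ereal l0 + -\<infinity>" using lm0 by metis
    then show False by simp
  qed
  define xr where "xr i = real_of_ereal (x i)" for i
  have xe: "x = (\<lambda>i. ereal (xr i))"
    using xfin xR by (auto simp: xr_def fun_eq_iff intro: ereal_real'[symmetric])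
  have "a i - xr i - (a j - xr j) \<le> r" for i j
  proof (rule field_le_epsilon)
    fix \<delta> :: real assume "0 < \<delta>"
    then obtain l m where lm: "\<forall>i. ereal m + x i \<le> ereal (a i) \<and> ereal (a i) \<le> ereal l + x i" "l - m < r + \<delta>"
      using ex_el by blast
    have "a i \<le> l + xr i" "m + xr j \<le> a j" using lm(1) unfolding xe by auto
    then show "a i - xr i - (a j - xr j) \<le> r + \<delta>" using lm(2) by linarith
  qed
  then show ?thesis using xe by blast
qed

lemma ball_sub:
  fixes V :: "'n::finite \<Rightarrow> 'p::finite \<Rightarrow> ereal" and c :: "'n \<Rightarrow> real"
  assumes V: "\<forall>i k. V i k \<noteq> \<infinity>" and row: "\<forall>i. \<exists>k. V i k \<noteq> -\<infinity>"
    and col: "\<forall>k. \<exists>i. V i k \<noteq> -\<infinity>"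
    and sub: "\<forall>i. T_op V (\<lambda>j. ereal (c j)) i \<le> ereal (- r) + ereal (c i)"
  shows "hball (\<lambda>i. - c i) (ereal r) \<subseteq> Col V"
proof
  fix x assume x: "x \<in> hball (\<lambda>i. - c i) (ereal r)"
  obtain xr where xe: "x = (\<lambda>i. ereal (xr i))" and bd: "\<forall>i j. - c i - xr i - (- c j - xr j) \<le> r"
    using hball_fin[OF x] by blast
  define z where "z k = (INF j\<in>UNIV. ereal (xr j) - V j k)" for k
  have zlow: "z k \<le> ereal (xr j) - V j k" for j k unfolding z_def by (rule INF_lower) simp
  have znot: "z k \<noteq> \<infinity>" for k
  proof -
    obtain j where j: "V j k \<noteq> -\<infinity>" using col by blast
    then obtain w where w: "V j k = ereal w" using V by (cases "V j k") auto
    have "z k \<le> ereal (xr j - w)" using zlow[of k j] w by simp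
    then show ?thesis by auto
  qed
  have tm: "trop_mv V z i = ereal (xr i)" for i
  proof (rule antisym)
    show "trop_mv V z i \<le> ereal (xr i)"
      unfolding trop_mv_def
    proof (rule SUP_least)
      fix k
      show "V i k + z k \<le> ereal (xr i)"
      proof (cases "V i k")
        case (real v)
        have "z k \<le> ereal (xr i - v)" using zlow[of k i] real by simp
        then have "ereal v + z k \<le> ereal v + ereal (xr i - v)" by (rule add_left_mono)
        then show ?thesis using real by simp
      next
        case MInf then show ?thesis using znot[of k] by (cases "z k") auto
      next
        case PInf then show ?thesis using V by auto
      qed
    qed
  next
    let ?E = "{k. V i k \<noteq> -\<infinity>}"
    have E: "finite ?E" "?E \<noteq> {}" using row by auto
    obtain k0 where k0: "k0 \<in> ?E"
      "(INF k\<in>?E. - V i k + (SUP j\<in>{j. j \<noteq> i}. V j k + ereal (c j))) = - V i k0 + (SUP j\<in>{j. j \<noteq> i}. V j k0 + ereal (c j))"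
      using INF_attained[OF E, of "\<lambda>k. - V i k + (SUP j\<in>{j. j \<noteq> i}. V j k + ereal (c j))"] by blast
    obtain v0 where v0: "V i k0 = ereal v0" using k0(1) V by (cases "V i k0") auto
    have Teq: "T_op V (\<lambda>j. ereal (c j)) i = - V i k0 + (SUP j\<in>{j. j \<noteq> i}. V j k0 + ereal (c j))"
      using k0(2) unfolding T_op_def by simp
    have hyp: "- V i k0 + (SUP j\<in>{j. j \<noteq> i}. V j k0 + ereal (c j)) \<le> ereal (- r) + ereal (c i)"
      using sub Teq by metis
    have "ereal (xr i - v0) \<le> z k0"
      unfolding z_def
    proof (rule INF_greatest)
      fix j
      show "ereal (xr i - v0) \<le> ereal (xr j) - V j k0"
      proof (cases "j = i")
        case True then show ?thesis using v0 by simp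
      next
        case False
        show ?thesis
        proof (cases "V j k0")
          case (real w)
          have "- V i k0 + (V j k0 + ereal (c j)) \<le> - V i k0 + (SUP j\<in>{j. j \<noteq> i}. V j k0 + ereal (c j))"
            using False by (intro add_left_mono SUP_upper) auto
          also note hyp
          finally have "- v0 + (w + c j) \<le> - r + c i" using real v0 by simp
          moreover have "- c j - xr j - (- c i - xr i) \<le> r" using bd by blast
          ultimately show ?thesis using real by simp
        qed (use V in auto)
      qed
    qed
    then have "ereal v0 + ereal (xr i - v0) \<le> V i k0 + z k0" unfolding v0 by (rule add_left_mono)
    also have "\<dots> \<le> trop_mv V z i" unfolding trop_mv_def by (rule SUP_upper) simp
    finally show "ereal (xr i) \<le> trop_mv V z i" by simp
  qed
  have "z \<in> Rmax_vecs" using znot by (simp add: Rmax_vecs_def)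
  moreover have "x = trop_mv V z" using tm xe by (simp add: fun_eq_iff)
  ultimately show "x \<in> Col V" unfolding Col_def by blast
qed

lemma sub_ball:
  fixes V :: "'n::finite \<Rightarrow> 'p::finite \<Rightarrow> ereal" and c :: "'n \<Rightarrow> real"
  assumes V: "\<forall>i k. V i k \<noteq> \<infinity>" and r: "0 \<le> r"
    and sub: "hball (\<lambda>i. - c i) (ereal r) \<subseteq> Col V"
  shows "\<forall>i. T_op V (\<lambda>j. ereal (c j)) i \<le> ereal (- r) + ereal (c i)"
proof
  fix l
  define g where "g j = ereal (- c j + (if j = l then r else 0))" for j
  have nb: "(\<lambda>i. ereal (- c i)) \<noteq> botv" by (auto simp: botv_def fun_eq_iff)
  let ?H = "{ereal (la - m) | la m. \<forall>i. ereal m + g i \<le> ereal (- c i) \<and> ereal (- c i) \<le> ereal la + g i}"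
  have "ereal (0 - (- r)) \<in> ?H"
  proof -
    have "\<forall>i. ereal (- r) + g i \<le> ereal (- c i) \<and> ereal (- c i) \<le> ereal 0 + g i"
      using r by (auto simp: g_def)
    then show ?thesis by blast
  qed
  from Inf_lower[OF this] have "Inf ?H \<le> ereal r" by simp
  then have "hilbert_dist (\<lambda>i. ereal (- c i)) g \<le> ereal r"
    using nb unfolding hilbert_dist_def by simp
  moreover have "g \<in> Rmax_vecs" by (simp add: g_def Rmax_vecs_def)
  ultimately have "g \<in> hball (\<lambda>i. - c i) (ereal r)" by (simp add: hball_def)
  with sub have "g \<in> Col V" by blast
  then obtain x where x: "x \<in> Rmax_vecs" "g = trop_mv V x" unfolding Col_def by blast
  obtain k0 where k0: "(SUP k\<in>UNIV. V l k + x k) = V l k0 + x k0"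
    using SUP_attained[of "UNIV::'p set" "\<lambda>k. V l k + x k"] by auto
  have gj: "V j k0 + x k0 \<le> g j" for j
  proof -
    have "V j k0 + x k0 \<le> (SUP k\<in>UNIV. V j k + x k)" by (rule SUP_upper) simp
    then show ?thesis using x(2) unfolding trop_mv_def by simp
  qed
  have "g l = trop_mv V x l" using x(2) by simp
  also have "\<dots> = V l k0 + x k0" using k0 unfolding trop_mv_def by simp
  finally have gl: "V l k0 + x k0 = ereal (- c l + r)" by (simp add: g_def)
  have xnot: "x k0 \<noteq> \<infinity>" using x(1) by (simp add: Rmax_vecs_def)
  obtain v q where vq: "V l k0 = ereal v" "x k0 = ereal q"
    using gl V xnot by (cases "V l k0"; cases "x k0") auto
  have vqe: "v + q = - c l + r" using gl vq by simp
  have "T_op V (\<lambda>j. ereal (c j)) l \<le> - V l k0 + (SUP j\<in>{j. j \<noteq> l}. V j k0 + ereal (c j))"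
    unfolding T_op_def by (rule INF_lower) (use vq in simp)
  also have "(SUP j\<in>{j. j \<noteq> l}. V j k0 + ereal (c j)) \<le> ereal (- q)"
  proof (rule SUP_least)
    fix j assume j: "j \<in> {j. j \<noteq> l}"
    show "V j k0 + ereal (c j) \<le> ereal (- q)"
    proof (cases "V j k0")
      case (real w)
      have "V j k0 + x k0 \<le> g j" by (rule gj)
      then have "w + q \<le> - c j" using real vq j by (simp add: g_def)
      then show ?thesis using real by simp
    qed (use V in auto)
  qed
  then have "- V l k0 + (SUP j\<in>{j. j \<noteq> l}. V j k0 + ereal (c j)) \<le> - V l k0 + ereal (- q)"
    by (rule add_left_mono)
  also have "\<dots> = ereal (- r) + ereal (c l)" using vq vqe by simp
  finally show "T_op V (\<lambda>j. ereal (c j)) l \<le> ereal (- r) + ereal (c l)" .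
qed

lemma le_neg_swap: "(a::ereal) \<le> - b \<longleftrightarrow> b \<le> - a"
  by (subst ereal_minus_le_minus[symmetric]) simp

lemma hball_mono: "r \<le> s \<Longrightarrow> hball a r \<subseteq> hball a s"
  unfolding hball_def by auto

theorem theorem3p3:
  fixes V :: "'n::finite \<Rightarrow> 'p::finite \<Rightarrow> ereal"
  assumes "\<forall>i k. V i k \<noteq> \<infinity>"
    and "\<forall>i. \<exists>k. V i k \<noteq> -\<infinity>"
    and "\<forall>k. \<exists>i. V i k \<noteq> -\<infinity>"
  shows "rho (T_op V) \<le> 0
    \<and> - rho (T_op V) = inrad_Col V
    \<and> (\<forall>(r::real) (a::'n \<Rightarrow> real).
          rho (T_op V) = ereal r \<longrightarrow>
          (\<forall>i. T_op V (\<lambda>j. ereal (a j)) i \<le> ereal r + ereal (a i)) \<longrightarrow>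
          hball (\<lambda>i. - a i) (ereal (- r)) \<subseteq> {x \<in> Col V. \<forall>i. \<bar>x i\<bar> \<noteq> \<infinity>}
          \<and> (\<forall>(b::'n \<Rightarrow> real) (s::ereal). 0 \<le> s \<and> hball b s \<subseteq> Col V \<longrightarrow> s \<le> ereal (- r)))"
proof -
  note V = assms(1) and row = assms(2) and col = assms(3)
  define R where "R = rho (T_op V)"
  define RR where "RR = {r. 0 \<le> r \<and> (\<exists>a. hball a r \<subseteq> Col V)}"
  have inr: "inrad_Col V = Sup RR" unfolding inrad_Col_def RR_def ..
  have rho_le: "R \<le> ereal \<mu>" if "\<forall>i. T_op V (\<lambda>j. ereal (c j)) i \<le> ereal \<mu> + ereal (c i)" for c \<mu>
    unfolding R_def rho_def
  proof (rule Sup_least)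
    fix lam assume "lam \<in> {lam. lam \<noteq> \<infinity> \<and> (\<exists>u\<in>Rmax_vecs. u \<noteq> botv \<and> T_op V u = (\<lambda>i. lam + u i))}"
    then obtain u where "u \<in> Rmax_vecs" "u \<noteq> botv" "T_op V u = (\<lambda>i. lam + u i)" by blast
    then show "lam \<le> ereal \<mu>" using easy[OF row _ _ _ that] by blast
  qed
  have H: "(\<exists>c. \<forall>i. T_op V (\<lambda>j. ereal (c j)) i \<le> ereal \<nu> + ereal (c i)) \<or> ereal \<nu> \<le> R" for \<nu>
  proof (cases "\<exists>c. \<forall>i. T_op V (\<lambda>j. ereal (c j)) i \<le> ereal \<nu> + ereal (c i)")
    case True then show ?thesis by blast
  next
    case False
    then obtain lam u where lu: "ereal \<nu> \<le> lam" "lam \<noteq> \<infinity>" "u \<in> Rmax_vecs" "u \<noteq> botv" "T_op V u = (\<lambda>i. lam + u i)"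
      using hard[OF V row] by blast
    have "lam \<le> R" unfolding R_def rho_def by (rule Sup_upper) (use lu in blast)
    then have "ereal \<nu> \<le> R" using lu(1) by (rule order_trans[rotated])
    then show ?thesis by blast
  qed
  obtain c0 where c0: "\<forall>i. T_op V (\<lambda>j. ereal (c0 j)) i \<le> ereal 0 + ereal (c0 i)"
    using P0[OF V row] by blast
  have R0: "R \<le> 0" using rho_le[OF c0] by (simp add: zero_ereal_def)
  have RR0: "0 \<in> RR"
  proof -
    have "hball (\<lambda>i. - c0 i) (ereal 0) \<subseteq> Col V"
      by (rule ball_sub[OF V row col]) (use c0 in simp)
    then show ?thesis unfolding RR_def by (auto simp: zero_ereal_def)
  qed
  have RRle: "R \<le> - r" if "r \<in> RR" for r
  proof -
    from that obtain a where r0: "0 \<le> r" and sub: "hball a r \<subseteq> Col V" unfolding RR_def by blast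
    have fin: "R \<le> ereal (- r')" if "0 \<le> r'" "ereal r' \<le> r" for r'
    proof -
      have "hball (\<lambda>i. - (- a i)) (ereal r') \<subseteq> Col V"
        using hball_mono[OF that(2), of a] sub by simp
      from sub_ball[OF V that(1) this] show "R \<le> ereal (- r')" by (rule rho_le)
    qed
    show ?thesis
    proof (cases r)
      case (real r')
      then show ?thesis using fin[of r'] r0 by simp
    next
      case PInf
      have "R = -\<infinity>"
      proof (rule ccontr)
        assume "R \<noteq> -\<infinity>"
        then obtain q where q: "R = ereal q" using R0 by (cases R) auto
        have "R \<le> ereal (- (\<bar>q\<bar> + 1))" using fin[of "\<bar>q\<bar> + 1"] PInf by simp
        then show False using q by simp
      qed
      then show ?thesis by simp
    next
      case MInf then show ?thesis using r0 by simp
    qed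
  qed
  have inrad_eq: "- R = Sup RR"
  proof (rule antisym)
    show "Sup RR \<le> - R"
      by (rule Sup_least) (use RRle le_neg_swap in blast)
    show "- R \<le> Sup RR"
    proof (rule ccontr)
      assume "\<not> - R \<le> Sup RR"
      then have "Sup RR < - R" by simp
      then obtain r where r: "Sup RR < ereal r" "ereal r < - R" using ereal_dense2 by blast
      have "0 \<le> Sup RR" using RR0 by (rule Sup_upper)
      then have "0 < ereal r" using r(1) by (rule le_less_trans)
      then have r0: "0 \<le> r" by simp
      from H[of "- r"] show False
      proof
        assume "\<exists>c. \<forall>i. T_op V (\<lambda>j. ereal (c j)) i \<le> ereal (- r) + ereal (c i)"
        then obtain c where c: "\<forall>i. T_op V (\<lambda>j. ereal (c j)) i \<le> ereal (- r) + ereal (c i)" by blast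
        have "hball (\<lambda>i. - c i) (ereal r) \<subseteq> Col V" by (rule ball_sub[OF V row col c])
        then have "ereal r \<in> RR" using r0 unfolding RR_def by auto
        then have "ereal r \<le> Sup RR" by (rule Sup_upper)
        then show False using r(1) by simp
      next
        assume "ereal (- r) \<le> R"
        then have "- R \<le> ereal r" using ereal_uminus_le_reorder[of R "ereal r"] by simp
        then show False using r(2) by simp
      qed
    qed
  qed
  have part3: "hball (\<lambda>i. - a i) (ereal (- r)) \<subseteq> {x \<in> Col V. \<forall>i. \<bar>x i\<bar> \<noteq> \<infinity>}
          \<and> (\<forall>(b::'n \<Rightarrow> real) (s::ereal). 0 \<le> s \<and> hball b s \<subseteq> Col V \<longrightarrow> s \<le> ereal (- r))"
    if Rr: "R = ereal r" and Ta: "\<forall>i. T_op V (\<lambda>j. ereal (a j)) i \<le> ereal r + ereal (a i)" for r a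
  proof
    have sub: "hball (\<lambda>i. - a i) (ereal (- r)) \<subseteq> Col V"
      by (rule ball_sub[OF V row col]) (use Ta in simp)
    show "hball (\<lambda>i. - a i) (ereal (- r)) \<subseteq> {x \<in> Col V. \<forall>i. \<bar>x i\<bar> \<noteq> \<infinity>}"
    proof
      fix x assume x: "x \<in> hball (\<lambda>i. - a i) (ereal (- r))"
      obtain xr where "x = (\<lambda>i. ereal (xr i))" using hball_fin[OF x] by blast
      then show "x \<in> {x \<in> Col V. \<forall>i. \<bar>x i\<bar> \<noteq> \<infinity>}" using x sub by auto
    qed
    show "\<forall>(b::'n \<Rightarrow> real) (s::ereal). 0 \<le> s \<and> hball b s \<subseteq> Col V \<longrightarrow> s \<le> ereal (- r)"
    proof (intro allI impI)
      fix b :: "'n \<Rightarrow> real" and s :: ereal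
      assume "0 \<le> s \<and> hball b s \<subseteq> Col V"
      then have "s \<in> RR" unfolding RR_def by blast
      then have "s \<le> Sup RR" by (rule Sup_upper)
      then show "s \<le> ereal (- r)" using inrad_eq Rr by simp
    qed
  qed
  have A: "rho (T_op V) \<le> 0" using R0 unfolding R_def .
  have B: "- rho (T_op V) = inrad_Col V" using inrad_eq inr unfolding R_def by simp
  have C: "\<forall>(r::real) (a::'n \<Rightarrow> real).
          rho (T_op V) = ereal r \<longrightarrow>
          (\<forall>i. T_op V (\<lambda>j. ereal (a j)) i \<le> ereal r + ereal (a i)) \<longrightarrow>
          hball (\<lambda>i. - a i) (ereal (- r)) \<subseteq> {x \<in> Col V. \<forall>i. \<bar>x i\<bar> \<noteq> \<infinity>}
          \<and> (\<forall>(b::'n \<Rightarrow> real) (s::ereal). 0 \<le> s \<and> hball b s \<subseteq> Col V \<longrightarrow> s \<le> ereal (- r))"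
  proof (intro allI impI)
    fix r a
    assume h: "rho (T_op V) = ereal r" "\<forall>i. T_op V (\<lambda>j. ereal (a j)) i \<le> ereal r + ereal (a i)"
    show "hball (\<lambda>i. - a i) (ereal (- r)) \<subseteq> {x \<in> Col V. \<forall>i. \<bar>x i\<bar> \<noteq> \<infinity>}
          \<and> (\<forall>(b::'n \<Rightarrow> real) (s::ereal). 0 \<le> s \<and> hball b s \<subseteq> Col V \<longrightarrow> s \<le> ereal (- r))"
      by (rule part3[of r a, unfolded R_def, OF h])
  qed
  from A B C show ?thesis by blast
qed

end
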